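(* Let $\Omega$ be a state space with finitely many extreme points and positive cone $V_+$, and let $(\cdot,\cdot)$ be an inner product on $V$. Suppose linear maps $J,K:V\to V$ are strictly positive with respect to $(\cdot,\cdot)$ and satisfy $J(V_+)=K(V_+)=V^{*int}_{+(\cdot,\cdot)}$. Then for each extreme point $\omega^{\mathrm{ext}}$ of $\Omega$ there exists $\mu(\omega^{\mathrm{ext}})>0$ such that $K(\omega^{\mathrm{ext}})=\mu(\omega^{\mathrm{ext}})J(\omega^{\mathrm{ext}})$.
   Context: $V=\mathbb R^{N+1}$. A state space $\Omega\subset V$ is a compact convex set with $\mathrm{span}(\Omega)=V$ and $0\notin\mathrm{aff}(\Omega)$; $V_+=\{\lambda\omega:\lambda\ge0,\omega\in\Omega\}$; $V^{*int}_{+(\cdot,\cdot)}=\{y\in V:(x,y)\ge0\ \forall x\in V_+\}$. A linear map $J$ is strictly positive with respect to $(\cdot,\cdot)$ if $(x,Jy)=(Jx,y)$ for all $x,y$ and $(x,Jx)>0$ for all nonzero $x$. *)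

theory Defs
  imports "HOL-Analysis.Analysis"
begin

definition is_inner_product :: "('a::real_vector \<Rightarrow> 'a \<Rightarrow> real) \<Rightarrow> bool" where
  "is_inner_product ip \<longleftrightarrow> bilinear ip \<and> (\<forall>x y. ip x y = ip y x) \<and> (\<forall>x. x \<noteq> 0 \<longrightarrow> ip x x > 0)"

definition state_space :: "'a::euclidean_space set \<Rightarrow> bool" where
  "state_space \<Omega> \<longleftrightarrow> compact \<Omega> \<and> convex \<Omega> \<and> span \<Omega> = UNIV \<and> 0 \<notin> affine hull \<Omega>"

definition pos_cone :: "'a::real_vector set \<Rightarrow> 'a set" where
  "pos_cone \<Omega> = {l *\<^sub>R w | l w. l \<ge> 0 \<and> w \<in> \<Omega>}"

definition internal_dual_cone :: "('a \<Rightarrow> 'a \<Rightarrow> real) \<Rightarrow> 'a set \<Rightarrow> 'a set" where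
  "internal_dual_cone ip C = {y. \<forall>x\<in>C. ip x y \<ge> 0}"

definition strictly_positive :: "('a::real_vector \<Rightarrow> 'a \<Rightarrow> real) \<Rightarrow> ('a \<Rightarrow> 'a) \<Rightarrow> bool" where
  "strictly_positive ip J \<longleftrightarrow> (\<forall>x y. ip x (J y) = ip (J x) y) \<and> (\<forall>x. x \<noteq> 0 \<longrightarrow> ip x (J x) > 0)"

end

theory Submission
  imports Defs
begin

lemma funpow_linear:
  fixes M :: "'a::real_vector \<Rightarrow> 'a"
  assumes "linear M" shows "linear (M ^^ k)"
proof (induction k)
  case 0 show ?case using linear_id[unfolded id_def] by simp
next
  case (Suc k)
  have "linear (M \<circ> (M ^^ k))" by (rule linear_compose[OF Suc assms])
  then show ?case by (metis funpow.simps(2))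
qed

lemma shiftB:
  fixes M :: "'a \<Rightarrow> 'a" and B :: "'a \<Rightarrow> 'a \<Rightarrow> real"
  assumes Badj: "\<And>x y. B x (M y) = B (M x) y"
  shows "B x ((M ^^ (i + j)) y) = B ((M ^^ i) x) ((M ^^ j) y)"
proof (induction i arbitrary: x)
  case 0 then show ?case by simp
next
  case (Suc i)
  have "B x ((M ^^ (Suc i + j)) y) = B x (M ((M ^^ (i + j)) y))" by simp
  also have "\<dots> = B (M x) ((M ^^ (i + j)) y)" by (rule Badj)
  also have "\<dots> = B ((M ^^ i) (M x)) ((M ^^ j) y)" by (rule Suc)
  also have "(M ^^ i) (M x) = (M ^^ Suc i) x" by (simp add: funpow_swap1)
  finally show ?case .
qed

lemma eig_root:
  fixes M :: "'a::real_vector \<Rightarrow> 'a" and B :: "'a \<Rightarrow> 'a \<Rightarrow> real"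
  assumes linM: "linear M" and Blin: "\<And>x. linear (B x)"
    and Bpos: "\<And>x. x \<noteq> 0 \<Longrightarrow> B x x > 0" and Badj: "\<And>x y. B x (M y) = B (M x) y"
    and Mpos: "\<And>x. B x (M x) \<ge> 0"
    and m: "m > 0" and c: "c > 0" and eq: "(M ^^ m) u = c *\<^sub>R u"
  shows "M u = root m c *\<^sub>R u"
proof -
  define l where "l = root m c"
  have l: "l > 0" using m c by (simp add: l_def)
  have lm: "l ^ m = c" using m c by (simp add: l_def real_root_pow_pos)
  have linP: "linear (M ^^ k)" for k using funpow_linear[OF linM] .
  have Bnn: "B x ((M ^^ k) x) \<ge> 0" for x k
  proof -
    define j where "j = k div 2"
    have "k = j + j \<or> k = Suc (j + j)" unfolding j_def by presburger
    then show ?thesis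
    proof
      assume k: "k = j + j"
      have "B x ((M ^^ k) x) = B ((M ^^ j) x) ((M ^^ j) x)" using shiftB[of B M, OF Badj] k by simp
      also have "\<dots> \<ge> 0"
        using Bpos[of "(M ^^ j) x"] linear_0[OF Blin[of 0]] by (cases "(M ^^ j) x = 0") auto
      finally show ?thesis .
    next
      assume k: "k = Suc (j + j)"
      have "B x ((M ^^ k) x) = B ((M ^^ j) x) ((M ^^ Suc j) x)"
        using shiftB[of B M, OF Badj, of x j "Suc j"] k by simp
      also have "\<dots> = B ((M ^^ j) x) (M ((M ^^ j) x))" by simp
      also have "\<dots> \<ge> 0" by (rule Mpos)
      finally show ?thesis .
    qed
  qed
  define q where "q x = (\<Sum>k<m. l ^ k *\<^sub>R (M ^^ (m - 1 - k)) x)" for x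
  define w where "w = M u - l *\<^sub>R u"
  define g where "g k = l ^ k *\<^sub>R (M ^^ (m - k)) u" for k
  have "q w = (\<Sum>k<m. g k - g (Suc k))"
    unfolding q_def
  proof (rule sum.cong[OF refl])
    fix k assume "k \<in> {..<m}"
    then have k: "k < m" by simp
    have "(M ^^ (m - 1 - k)) w = (M ^^ (m - 1 - k)) (M u) - l *\<^sub>R (M ^^ (m - 1 - k)) u"
      unfolding w_def using linP[of "m - 1 - k"] by (simp add: linear_diff linear_scale)
    also have "(M ^^ (m - 1 - k)) (M u) = (M ^^ (m - k)) u"
      proof -
      have "m - k = Suc (m - 1 - k)" using k by simp
      then show ?thesis by (simp add: funpow_swap1)
    qed
    finally have eqw: "(M ^^ (m - 1 - k)) w = (M ^^ (m - k)) u - l *\<^sub>R (M ^^ (m - 1 - k)) u" .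
    show "l ^ k *\<^sub>R (M ^^ (m - 1 - k)) w = g k - g (Suc k)"
      unfolding g_def eqw by (simp add: scaleR_diff_right)
  qed
  also have "\<dots> = g 0 - g m" by (rule sum_lessThan_telescope')
  also have "\<dots> = 0" unfolding g_def using eq lm by simp
  finally have qw: "q w = 0" .
  show ?thesis
  proof (rule ccontr)
    assume "M u \<noteq> root m c *\<^sub>R u"
    then have w0: "w \<noteq> 0" unfolding w_def l_def by simp
    have mm: "m - 1 \<in> {..<m}" using m by simp
    have "B w (q w) = (\<Sum>k<m. l ^ k * B w ((M ^^ (m - 1 - k)) w))"
      unfolding q_def using Blin[of w] by (simp add: linear_sum linear_scale)
    also have "\<dots> = l ^ (m - 1) * B w ((M ^^ (m - 1 - (m - 1))) w)
        + (\<Sum>k\<in>{..<m} - {m - 1}. l ^ k * B w ((M ^^ (m - 1 - k)) w))"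
      by (rule sum.remove[OF _ mm]) simp
    also have "\<dots> \<ge> l ^ (m - 1) * B w w + 0"
      apply (rule add_mono)
       apply simp
      apply (rule sum_nonneg)
      using l Bnn by simp
    finally have "B w (q w) \<ge> l ^ (m - 1) * B w w" by simp
    moreover have "l ^ (m - 1) * B w w > 0" using l Bpos[OF w0] by simp
    moreover have "B w (q w) = 0" using qw linear_0[OF Blin[of w]] by simp
    ultimately show False by simp
  qed
qed


definition ray_ext :: "'a::real_vector set \<Rightarrow> 'a \<Rightarrow> bool" where
  "ray_ext P x \<longleftrightarrow> x \<in> P \<and> x \<noteq> 0 \<and> (\<forall>a b. a \<in> P \<longrightarrow> b \<in> P \<longrightarrow> a + b = x \<longrightarrow> (\<exists>s. a = s *\<^sub>R x))"

lemma aff_scale: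
  fixes S :: "'a::real_vector set"
  assumes "0 \<notin> affine hull S" "a \<in> affine hull S" "w \<in> affine hull S" "a = c *\<^sub>R w"
  shows "c = 1"
proof (rule ccontr)
  assume c: "c \<noteq> 1"
  then have c1: "1 - c \<noteq> 0" by simp
  have "(1/(1-c)) *\<^sub>R a + (-c/(1-c)) *\<^sub>R w \<in> affine hull S"
    by (rule mem_affine[OF affine_affine_hull assms(2,3)]) (use c1 in \<open>simp add: field_simps\<close>)
  moreover have "(1/(1-c)) *\<^sub>R a + (-c/(1-c)) *\<^sub>R w = ((1/(1-c))*c + (-c/(1-c))) *\<^sub>R w"
    unfolding assms(4) by (simp add: scaleR_add_left)
  moreover have "(1/(1-c))*c + (-c/(1-c)) = 0" by (simp add: field_simps)
  ultimately show False using assms(1) by simp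
qed

lemma in_pos_cone: "l \<ge> 0 \<Longrightarrow> w \<in> \<Omega> \<Longrightarrow> l *\<^sub>R w \<in> pos_cone \<Omega>"
  unfolding pos_cone_def by blast

lemma pos_coneE: "x \<in> pos_cone \<Omega> \<Longrightarrow> (\<And>l w. l \<ge> 0 \<Longrightarrow> w \<in> \<Omega> \<Longrightarrow> x = l *\<^sub>R w \<Longrightarrow> thesis) \<Longrightarrow> thesis"
  unfolding pos_cone_def by blast

lemma ext_to_ray:
  fixes \<Omega> :: "'a::real_vector set"
  assumes aff: "0 \<notin> affine hull \<Omega>" and ext: "w extreme_point_of \<Omega>"
  shows "ray_ext (pos_cone \<Omega>) w"
proof -
  have wO: "w \<in> \<Omega>" using ext by (simp add: extreme_point_of_def)
  have Oaff: "\<Omega> \<subseteq> affine hull \<Omega>" by (rule hull_subset)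
  have w0: "w \<noteq> 0" using wO Oaff aff by auto
  have wP: "w \<in> pos_cone \<Omega>" using in_pos_cone[of 1 w \<Omega>] wO by simp
  have "\<exists>s. a = s *\<^sub>R w" if aP: "a \<in> pos_cone \<Omega>" and bP: "b \<in> pos_cone \<Omega>" and ab: "a + b = w" for a b
  proof -
    obtain \<alpha> p where \<alpha>: "\<alpha> \<ge> 0" "p \<in> \<Omega>" "a = \<alpha> *\<^sub>R p" using aP by (rule pos_coneE)
    obtain \<beta> q where \<beta>: "\<beta> \<ge> 0" "q \<in> \<Omega>" "b = \<beta> *\<^sub>R q" using bP by (rule pos_coneE)
    define s where "s = \<alpha> + \<beta>"
    have s0: "s \<noteq> 0"
    proof
      assume "s = 0"
      then have "\<alpha> = 0" "\<beta> = 0" using \<alpha>(1) \<beta>(1) unfolding s_def by linarith+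
      then show False using ab w0 \<alpha> \<beta> by simp
    qed
    define r where "r = (\<alpha>/s) *\<^sub>R p + (\<beta>/s) *\<^sub>R q"
    have s1: "\<alpha>/s + \<beta>/s = 1" using s0 unfolding add_divide_distrib[symmetric] s_def by simp
    have pA: "p \<in> affine hull \<Omega>" using \<alpha>(2) Oaff by (rule subsetD[rotated])
    have qA: "q \<in> affine hull \<Omega>" using \<beta>(2) Oaff by (rule subsetD[rotated])
    have rA: "r \<in> affine hull \<Omega>" unfolding r_def
      by (rule mem_affine[OF affine_affine_hull pA qA s1])
    have "s *\<^sub>R r = w" unfolding r_def using s0 ab \<alpha> \<beta> by (simp add: scaleR_add_right)
    then have wsr: "w = s *\<^sub>R r" by simp
    have wA: "w \<in> affine hull \<Omega>" using wO Oaff by (rule subsetD[rotated])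
    have "s = 1" by (rule aff_scale[OF aff wA rA wsr])
    then have \<beta>1: "\<beta> = 1 - \<alpha>" unfolding s_def by simp
    show ?thesis
    proof (cases "\<alpha> = 0")
      case True then show ?thesis using \<alpha> by (intro exI[of _ 0]) simp
    next
      case a0: False
      show ?thesis
      proof (cases "\<alpha> = 1")
        case True then have "b = 0" using \<beta> \<beta>1 by simp
        then show ?thesis using ab by (intro exI[of _ 1]) simp
      next
        case a1: False
        have wpq: "w = \<alpha> *\<^sub>R p + (1 - \<alpha>) *\<^sub>R q" using ab \<alpha> \<beta> \<beta>1 by simp
        show ?thesis
        proof (cases "p = q")
          case True
          then have "w = p" using wpq by (simp add: scaleR_add_left[symmetric])
          then show ?thesis using \<alpha>(3) by (intro exI[of _ \<alpha>]) simp
        next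
          case False
          have "0 < 1 - \<alpha>" "1 - \<alpha> < 1" using \<alpha> \<beta> \<beta>1 a0 a1 by auto
          then have "w \<in> open_segment p q" unfolding in_segment using False wpq
            by (intro conjI exI[of _ "1 - \<alpha>"]) auto
          then show ?thesis using ext \<alpha>(2) \<beta>(2) unfolding extreme_point_of_def by auto
        qed
      qed
    qed
  qed
  then show ?thesis unfolding ray_ext_def using wP w0 by blast
qed

lemma ray_to_ext:
  fixes \<Omega> :: "'a::real_vector set"
  assumes aff: "0 \<notin> affine hull \<Omega>" and r: "ray_ext (pos_cone \<Omega>) x"
  shows "\<exists>t e. t > 0 \<and> e extreme_point_of \<Omega> \<and> x = t *\<^sub>R e"
proof -
  have Oaff: "\<Omega> \<subseteq> affine hull \<Omega>" by (rule hull_subset)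
  have xP: "x \<in> pos_cone \<Omega>" and x0: "x \<noteq> 0" using r unfolding ray_ext_def by auto
  obtain t w where t: "t \<ge> 0" "w \<in> \<Omega>" "x = t *\<^sub>R w" using xP by (rule pos_coneE)
  have tp: "t > 0" using t x0 by (cases "t = 0") auto
  have "w extreme_point_of \<Omega>" unfolding extreme_point_of_def
  proof (intro conjI ballI)
    show "w \<in> \<Omega>" by fact
    fix a b assume aO: "a \<in> \<Omega>" and bO: "b \<in> \<Omega>"
    show "w \<notin> open_segment a b"
    proof
      assume "w \<in> open_segment a b"
      then obtain u where ab: "a \<noteq> b" and u: "0 < u" "u < 1" and wu: "w = (1 - u) *\<^sub>R a + u *\<^sub>R b"
        unfolding in_segment by blast
      have "(t*(1-u)) *\<^sub>R a \<in> pos_cone \<Omega>" by (rule in_pos_cone) (use aO t u in auto)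
      moreover have "(t*u) *\<^sub>R b \<in> pos_cone \<Omega>" by (rule in_pos_cone) (use bO t u in auto)
      moreover have "(t*(1-u)) *\<^sub>R a + (t*u) *\<^sub>R b = x" using t wu by (simp add: scaleR_add_right)
      ultimately obtain s where s: "(t*(1-u)) *\<^sub>R a = s *\<^sub>R x" using r unfolding ray_ext_def by blast
      have ne: "t*(1-u) \<noteq> 0" using tp u by simp
      have "a = (1/(t*(1-u))) *\<^sub>R ((t*(1-u)) *\<^sub>R a)" using ne by simp
      also have "\<dots> = ((s*t)/(t*(1-u))) *\<^sub>R w" unfolding s t(3) by simp
      finally have aeq: "a = ((s*t)/(t*(1-u))) *\<^sub>R w" .
      have "(s*t)/(t*(1-u)) = 1" by (rule aff_scale[OF aff _ _ aeq]) (use aO t(2) Oaff in auto)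
      then have aw: "a = w" using aeq by simp
      have h: "w = (1 - u) *\<^sub>R w + u *\<^sub>R b" using wu aw by simp
      have "u *\<^sub>R w = w - (1 - u) *\<^sub>R w" by (simp add: algebra_simps)
      also have "\<dots> = u *\<^sub>R b" using h by (metis add_diff_cancel_left')
      finally have "u *\<^sub>R w = u *\<^sub>R b" .
      then have "w = b" using u by simp
      then show False using ab aw by simp
    qed
  qed
  then show ?thesis using tp t by blast
qed

lemma ray_map:
  assumes L: "linear L" "inj L" "L ` P = P" and r: "ray_ext P x"
  shows "ray_ext P (L x)"
proof -
  have xP: "x \<in> P" and x0: "x \<noteq> 0" and rx: "\<And>a b. a \<in> P \<Longrightarrow> b \<in> P \<Longrightarrow> a + b = x \<Longrightarrow> \<exists>s. a = s *\<^sub>R x"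
    using r unfolding ray_ext_def by auto
  have "L x \<in> L ` P" using xP by (rule imageI)
  then have LxP: "L x \<in> P" unfolding L(3) .
  have Lx0: "L x \<noteq> 0"
  proof
    assume "L x = 0"
    then have "L x = L 0" using linear_0[OF L(1)] by simp
    then have "x = 0" by (rule injD[OF L(2)])
    then show False using x0 by simp
  qed
  have "\<exists>s. a = s *\<^sub>R L x" if aP: "a \<in> P" and bP: "b \<in> P" and ab: "a + b = L x" for a b
  proof -
    have "a \<in> L ` P" using aP unfolding L(3) .
    then obtain a' where a': "a' \<in> P" "a = L a'" by (rule imageE) simp
    have "b \<in> L ` P" using bP unfolding L(3) .
    then obtain b' where b': "b' \<in> P" "b = L b'" by (rule imageE) simp
    have "L (a' + b') = L x" using ab a'(2) b'(2) linear_add[OF L(1)] by simp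
    then have "a' + b' = x" by (rule injD[OF L(2)])
    then obtain s where s: "a' = s *\<^sub>R x" using rx[OF a'(1) b'(1)] by blast
    have "a = s *\<^sub>R L x" unfolding a'(2) s by (rule linear_scale[OF L(1)])
    then show ?thesis by blast
  qed
  then show ?thesis unfolding ray_ext_def using LxP Lx0 by blast
qed

lemma inj_funpow:
  fixes M :: "'a \<Rightarrow> 'a"
  assumes "inj M" shows "inj (M ^^ k)"
proof (induction k)
  case 0 show ?case by (simp add: inj_on_def)
next
  case (Suc k)
  have "inj (M \<circ> (M ^^ k))" by (rule inj_compose[OF assms Suc])
  then show ?case by (metis funpow.simps(2))
qed

theorem lemmaB4:
  fixes \<Omega> :: "(real ^ 'n) set"
    and ip :: "real ^ 'n \<Rightarrow> real ^ 'n \<Rightarrow> real"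
    and J K :: "real ^ 'n \<Rightarrow> real ^ 'n"
  assumes "state_space \<Omega>"
    and "finite {w. w extreme_point_of \<Omega>}"
    and "is_inner_product ip"
    and "linear J" and "linear K"
    and "strictly_positive ip J" and "strictly_positive ip K"
    and "J ` pos_cone \<Omega> = internal_dual_cone ip (pos_cone \<Omega>)"
    and "K ` pos_cone \<Omega> = internal_dual_cone ip (pos_cone \<Omega>)"
  shows "\<forall>w. w extreme_point_of \<Omega> \<longrightarrow> (\<exists>\<mu>>0. K w = \<mu> *\<^sub>R J w)"
proof (intro allI impI)
  fix w assume wext: "w extreme_point_of \<Omega>"
  define P where "P = pos_cone \<Omega>"
  have aff: "0 \<notin> affine hull \<Omega>" using assms(1) unfolding state_space_def by blast
  have iplin: "\<And>x. linear (ip x)" and ipsym: "\<And>x y. ip x y = ip y x"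
    using assms(3) unfolding is_inner_product_def bilinear_def by auto
  have Jsym: "\<And>x y. ip x (J y) = ip (J x) y" and Jpos: "\<And>x. x \<noteq> 0 \<Longrightarrow> ip x (J x) > 0"
    using assms(6) unfolding strictly_positive_def by auto
  have Ksym: "\<And>x y. ip x (K y) = ip (K x) y" and Kpos: "\<And>x. x \<noteq> 0 \<Longrightarrow> ip x (K x) > 0"
    using assms(7) unfolding strictly_positive_def by auto
  have ip0: "\<And>x. ip x 0 = 0" using iplin linear_0 by blast
  have injJ: "inj J"
  proof (rule injI)
    fix x y assume "J x = J y"
    then have "J (x - y) = 0" using linear_diff[OF assms(4)] by simp
    then show "x = y" using Jpos[of "x - y"] ip0 by (cases "x - y = 0") auto
  qed
  have injK: "inj K"
  proof (rule injI)
    fix x y assume "K x = K y"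
    then have "K (x - y) = 0" using linear_diff[OF assms(5)] by simp
    then show "x = y" using Kpos[of "x - y"] ip0 by (cases "x - y = 0") auto
  qed
  obtain Ji where Ji: "linear Ji" "\<And>x. Ji (J x) = x" "\<And>x. J (Ji x) = x"
    using linear_injective_isomorphism[OF assms(4) injJ] by blast
  define M where "M x = Ji (K x)" for x
  have linM: "linear M" unfolding M_def using linear_compose[OF assms(5) Ji(1)] by (simp add: o_def)
  have injM: "inj M" unfolding M_def
  proof (rule injI)
    fix x y assume "Ji (K x) = Ji (K y)"
    then have "J (Ji (K x)) = J (Ji (K y))" by simp
    then show "x = y" using Ji(3) injK by (simp add: inj_eq)
  qed
  have JM: "J (M x) = K x" for x unfolding M_def by (rule Ji(3))
  have MP: "M ` P = P"
  proof -
    have "M ` P = Ji ` (K ` P)" unfolding M_def by (simp add: image_image)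
    also have "K ` P = J ` P" using assms(8,9) unfolding P_def by simp
    also have "Ji ` (J ` P) = P" using Ji(2) by (simp add: image_image)
    finally show ?thesis .
  qed
  define B where "B x y = ip x (J y)" for x y
  have Blin: "linear (B x)" for x
    unfolding B_def using linear_compose[OF assms(4) iplin[of x]] by (simp add: o_def)
  have Bpos: "x \<noteq> 0 \<Longrightarrow> B x x > 0" for x unfolding B_def by (rule Jpos)
  have Badj: "B x (M y) = B (M x) y" for x y
  proof -
    have "B x (M y) = ip x (K y)" unfolding B_def JM ..
    also have "\<dots> = ip (K x) y" by (rule Ksym)
    also have "\<dots> = ip (J (M x)) y" unfolding JM ..
    also have "\<dots> = B (M x) y" unfolding B_def by (rule Jsym[symmetric])
    finally show ?thesis .
  qed
  have Mpos: "B x (M x) \<ge> 0" for x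
    unfolding B_def JM using Kpos[of x] ip0 linear_0[OF assms(5)] by (cases "x = 0") auto
  have rays: "ray_ext P ((M ^^ k) w)" for k
  proof (induction k)
    case 0 show ?case using ext_to_ray[OF aff wext] unfolding P_def by simp
  next
    case (Suc k)
    have "ray_ext P (M ((M ^^ k) w))" by (rule ray_map[OF linM injM MP Suc])
    then show ?case by simp
  qed
  have ex: "\<exists>t e. t > 0 \<and> e extreme_point_of \<Omega> \<and> (M ^^ k) w = t *\<^sub>R e" for k
    using ray_to_ext[OF aff rays[of k, unfolded P_def]] .
  define T where "T k = (SOME t. \<exists>e. t > 0 \<and> e extreme_point_of \<Omega> \<and> (M ^^ k) w = t *\<^sub>R e)" for k
  have Tk: "\<exists>e. T k > 0 \<and> e extreme_point_of \<Omega> \<and> (M ^^ k) w = T k *\<^sub>R e" for k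
    unfolding T_def by (rule someI_ex) (rule ex)
  define G where "G k = (SOME e. T k > 0 \<and> e extreme_point_of \<Omega> \<and> (M ^^ k) w = T k *\<^sub>R e)" for k
  have TGk: "T k > 0 \<and> G k extreme_point_of \<Omega> \<and> (M ^^ k) w = T k *\<^sub>R G k" for k
    unfolding G_def by (rule someI_ex) (rule Tk)
  have TG: "\<And>k. T k > 0" "\<And>k. G k extreme_point_of \<Omega>" "\<And>k. (M ^^ k) w = T k *\<^sub>R G k"
    using TGk by auto
  have "\<not> inj G"
  proof
    assume "inj G"
    have "range G \<subseteq> {w. w extreme_point_of \<Omega>}" using TG(2) by auto
    then have "finite (range G)" using assms(2) by (rule finite_subset)
    then have "finite (UNIV :: nat set)" by (rule finite_imageD[OF _ \<open>inj G\<close>])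
    then show False by simp
  qed
  then obtain i j where ij: "i \<noteq> j" "G i = G j" unfolding inj_def by blast
  obtain a b where ab: "a < b" "G a = G b"
  proof (cases "i < j")
    case True then show ?thesis using that[of i j] ij by simp
  next
    case False then have "j < i" using ij by simp
    then show ?thesis using that[of j i] ij by simp
  qed
  define u where "u = (M ^^ a) w"
  define m where "m = b - a"
  define c where "c = T b / T a"
  have m0: "m > 0" using ab unfolding m_def by simp
  have c0: "c > 0" unfolding c_def using TG(1) by simp
  have "(M ^^ m) u = (M ^^ (m + a)) w" unfolding u_def by (simp add: funpow_add)
  also have "m + a = b" using ab unfolding m_def by simp
  also have "(M ^^ b) w = T b *\<^sub>R G a" using TG(3) ab by simp
  also have "\<dots> = c *\<^sub>R (T a *\<^sub>R G a)" unfolding c_def using TG(1)[of a] by simp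
  also have "\<dots> = c *\<^sub>R u" unfolding u_def TG(3) ..
  finally have eq: "(M ^^ m) u = c *\<^sub>R u" .
  define lam where "lam = root m c"
  have l0: "lam > 0" unfolding lam_def using m0 c0 by simp
  have Mu: "M u = lam *\<^sub>R u" unfolding lam_def by (rule eig_root[OF linM Blin Bpos Badj Mpos m0 c0 eq])
  have "(M ^^ a) (M w) = M u" unfolding u_def by (simp add: funpow_swap1)
  also have "\<dots> = lam *\<^sub>R u" by (rule Mu)
  also have "\<dots> = (M ^^ a) (lam *\<^sub>R w)" unfolding u_def by (rule linear_scale[OF funpow_linear[OF linM], symmetric])
  finally have "M w = lam *\<^sub>R w" by (rule injD[OF inj_funpow[OF injM]])
  then have "K w = lam *\<^sub>R J w" using JM[of w] linear_scale[OF assms(4)] by simp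
  then show "\<exists>\<mu>>0. K w = \<mu> *\<^sub>R J w" using l0 by blast
qed

end
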